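(* Let $K$ be a field of characteristic $\neq 2$, $n\ge1$, and let $\mathcal C$ be an EACP over $K$ with natural basis $\{h_1,\dots,h_n,r\}$ and structural constants $a_{ij},b_i$. Suppose $\sum_{j=1}^n a_{ij}a_{jk}=0$ and $b_i=0$ for all $i,k=1,\dots,n$. Then $\mathcal C$ is nilpotent with index of nilpotency equal to $3$.
   Context: An EACP over a field $K$ (characteristic $\neq 2$) is a $K$-algebra $\mathcal C$ with a basis $\{h_1,\dots,h_n,r\}$ (called a natural basis) whose multiplication is determined by bilinearity from $$h_ir=rh_i=\tfrac12\Big(\sum_{j=1}^n a_{ij}h_j+b_ir\Big),\qquad h_ih_j=0\ (i,j=1,\dots,n),\qquad rr=0,$$ for some constants $a_{ij},b_i\in K$. For an algebra $\mathcal A$ set $\mathcal A^1=\mathcal A$ and $\mathcal A^k=\sum_{i=1}^{k-1}\mathcal A^i\mathcal A^{k-i}$; $\mathcal A$ is nilpotent if $\mathcal A^k=0$ for some $k$, and the least such $k$ is the index of nilpotency. *)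

theory Defs
  imports Main
begin

text \<open>An EACP over a field 'k with natural basis h_0,...,h_(n-1), r.
  Elements are coordinate functions v :: nat => 'k, where v i (i < n) is the
  coefficient of h_i and v n is the coefficient of r; coordinates above n vanish.\<close>

definition eacp_carrier :: "nat \<Rightarrow> (nat \<Rightarrow> 'k::field) set" where
  "eacp_carrier n = {v. \<forall>m>n. v m = 0}"

text \<open>Bilinear product: the only nonzero basis products are
  h_i r = r h_i = 1/2 (sum_j a_ij h_j + b_i r).\<close>
definition eacp_mult ::
  "(nat \<Rightarrow> nat \<Rightarrow> 'k::field) \<Rightarrow> (nat \<Rightarrow> 'k) \<Rightarrow> nat \<Rightarrow>
   (nat \<Rightarrow> 'k) \<Rightarrow> (nat \<Rightarrow> 'k) \<Rightarrow> (nat \<Rightarrow> 'k)" where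
  "eacp_mult a b n x y = (\<lambda>m. \<Sum>i<n. (x i * y n + x n * y i) *
      (if m < n then a i m / 2 else if m = n then b i / 2 else 0))"

text \<open>eacp_pow a b n k v  means  v belongs to the k-th power C^k, where
  C^1 = C and C^k = sum_{i=1}^{k-1} C^i C^(k-i) (for k >= 2 this is the linear
  span of all products x y with x in C^i, y in C^(k-i), 1 <= i < k).\<close>
inductive eacp_pow ::
  "(nat \<Rightarrow> nat \<Rightarrow> 'k::field) \<Rightarrow> (nat \<Rightarrow> 'k) \<Rightarrow> nat \<Rightarrow> nat \<Rightarrow> (nat \<Rightarrow> 'k) \<Rightarrow> bool"
  for a b n where
  base: "v \<in> eacp_carrier n \<Longrightarrow> eacp_pow a b n 1 v"
| zero: "k \<ge> 2 \<Longrightarrow> eacp_pow a b n k (\<lambda>m. 0)"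
| add: "k \<ge> 2 \<Longrightarrow> eacp_pow a b n k x \<Longrightarrow> eacp_pow a b n k y \<Longrightarrow>
          eacp_pow a b n k (\<lambda>m. x m + y m)"
| smult: "k \<ge> 2 \<Longrightarrow> eacp_pow a b n k x \<Longrightarrow> eacp_pow a b n k (\<lambda>m. c * x m)"
| prod: "eacp_pow a b n i x \<Longrightarrow> eacp_pow a b n j y \<Longrightarrow>
          eacp_pow a b n (i + j) (eacp_mult a b n x y)"

definition eacp_power :: "(nat \<Rightarrow> nat \<Rightarrow> 'k::field) \<Rightarrow> (nat \<Rightarrow> 'k) \<Rightarrow> nat \<Rightarrow> nat \<Rightarrow> (nat \<Rightarrow> 'k) set" where
  "eacp_power a b n k = {v. eacp_pow a b n k v}"

definition eacp_nilpotent :: "(nat \<Rightarrow> nat \<Rightarrow> 'k::field) \<Rightarrow> (nat \<Rightarrow> 'k) \<Rightarrow> nat \<Rightarrow> bool" where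
  "eacp_nilpotent a b n \<longleftrightarrow> (\<exists>k\<ge>1. eacp_power a b n k = {\<lambda>m. 0})"

definition eacp_nil_index :: "(nat \<Rightarrow> nat \<Rightarrow> 'k::field) \<Rightarrow> (nat \<Rightarrow> 'k) \<Rightarrow> nat \<Rightarrow> nat" where
  "eacp_nil_index a b n = (LEAST k. k \<ge> 1 \<and> eacp_power a b n k = {\<lambda>m. 0})"

end

theory Submission
  imports Defs
begin

definition QQ :: "(nat \<Rightarrow> nat \<Rightarrow> 'k::field) \<Rightarrow> nat \<Rightarrow> (nat \<Rightarrow> 'k) \<Rightarrow> bool" where
  "QQ a n v \<longleftrightarrow> v n = 0 \<and> (\<forall>m>n. v m = 0) \<and> (\<forall>m<n. (\<Sum>i<n. v i * a i m) = 0)"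

lemma mult_lt:
  "m < n \<Longrightarrow> eacp_mult a b n x y m = (\<Sum>i<n. (x i * y n + x n * y i) * a i m) / 2"
  by (simp add: eacp_mult_def sum_divide_distrib)

lemma mult_n: "\<forall>i<n. b i = 0 \<Longrightarrow> eacp_mult a b n x y n = 0"
  by (simp add: eacp_mult_def)

lemma mult_gt: "m > n \<Longrightarrow> eacp_mult a b n x y m = 0"
  by (simp add: eacp_mult_def)

lemma L2:
  assumes sq: "\<forall>i<n. \<forall>k<n. (\<Sum>j<n. a i j * a j k) = 0" and b0: "\<forall>i<n. b i = 0"
  shows "QQ a n (eacp_mult a b n x y)"
  unfolding QQ_def
proof (intro conjI allI impI)
  show "eacp_mult a b n x y n = 0" using b0 by (rule mult_n)
  fix m assume "m > n" thus "eacp_mult a b n x y m = 0" by (rule mult_gt)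
next
  fix m assume m: "m < n"
  have "(\<Sum>i<n. eacp_mult a b n x y i * a i m)
      = (\<Sum>i<n. \<Sum>l<n. (x l * y n + x n * y l) / 2 * (a l i * a i m))"
    using m by (intro sum.cong refl) (simp add: mult_lt sum_distrib_left sum_divide_distrib mult_ac)
  also have "\<dots> = (\<Sum>l<n. (x l * y n + x n * y l) / 2 * (\<Sum>i<n. a l i * a i m))"
    by (subst sum.swap) (simp add: sum_distrib_left)
  also have "\<dots> = 0" using sq m by simp
  finally show "(\<Sum>i<n. eacp_mult a b n x y i * a i m) = 0" .
qed

lemma L3:
  assumes b0: "\<forall>i<n. b i = 0" and q: "QQ a n x"
  shows "eacp_mult a b n x y = (\<lambda>m. 0)" "eacp_mult a b n y x = (\<lambda>m. 0)"
proof -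
  have xn: "x n = 0" and s: "\<And>m. m<n \<Longrightarrow> (\<Sum>i<n. x i * a i m) = 0"
    using q by (auto simp: QQ_def)
  have "\<And>m. eacp_mult a b n x y m = 0"
  proof -
    fix m
    show "eacp_mult a b n x y m = 0"
    proof (cases "m < n")
      case True
      have "eacp_mult a b n x y m = y n * (\<Sum>i<n. x i * a i m) / 2"
        using True by (simp add: mult_lt xn sum_distrib_left mult_ac)
      thus ?thesis using s True by simp
    next
      case False thus ?thesis using mult_n[OF b0] mult_gt
        by (metis linorder_neqE_nat)
    qed
  qed
  moreover have "\<And>m. eacp_mult a b n y x m = 0"
  proof -
    fix m
    show "eacp_mult a b n y x m = 0"
    proof (cases "m < n")
      case True
      have "eacp_mult a b n y x m = y n * (\<Sum>i<n. x i * a i m) / 2"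
        using True by (simp add: mult_lt xn sum_distrib_left mult_ac)
      thus ?thesis using s True by simp
    next
      case False thus ?thesis using mult_n[OF b0] mult_gt
        by (metis linorder_neqE_nat)
    qed
  qed
  ultimately show "eacp_mult a b n x y = (\<lambda>m. 0)" "eacp_mult a b n y x = (\<lambda>m. 0)"
    by auto
qed

lemma QQ0: "QQ a n (\<lambda>m. 0)" by (simp add: QQ_def)

lemma inv:
  assumes sq: "\<forall>i<n. \<forall>k<n. (\<Sum>j<n. a i j * a j k) = 0" and b0: "\<forall>i<n. b i = 0"
  shows "eacp_pow a b n k v \<Longrightarrow> k \<ge> 1 \<and> (k \<ge> 2 \<longrightarrow> QQ a n v) \<and> (k \<ge> 3 \<longrightarrow> v = (\<lambda>m. 0))"
proof (induction rule: eacp_pow.induct)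
  case (base v) thus ?case by simp
next
  case (zero k) thus ?case by (simp add: QQ0)
next
  case (add k x y) thus ?case
    by (auto simp: QQ_def sum.distrib distrib_right)
next
  case (smult k x c) thus ?case
    by (auto simp: QQ_def mult.assoc sum_distrib_left[symmetric])
next
  case (prod i x j y)
  have q: "QQ a n (eacp_mult a b n x y)" by (rule L2[OF sq b0])
  have "i + j \<ge> 3 \<Longrightarrow> eacp_mult a b n x y = (\<lambda>m. 0)"
  proof -
    assume "i + j \<ge> 3"
    hence "i \<ge> 2 \<or> j \<ge> 2" by arith
    thus ?thesis
    proof
      assume "i \<ge> 2" hence "QQ a n x" using prod.IH by simp
      thus ?thesis by (rule L3(1)[OF b0])
    next
      assume "j \<ge> 2" hence "QQ a n y" using prod.IH by simp
      thus ?thesis by (rule L3(2)[OF b0])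
    qed
  qed
  moreover have "i + j \<ge> 1" using prod.IH by simp
  ultimately show ?case using q by simp
qed

theorem mainTheorem4:
  fixes a :: "nat \<Rightarrow> nat \<Rightarrow> 'k::field" and b :: "nat \<Rightarrow> 'k" and n :: nat
  assumes char: "(2::'k) \<noteq> 0"
    and n: "n \<ge> 1"
    and sq: "\<forall>i<n. \<forall>k<n. (\<Sum>j<n. a i j * a j k) = 0"
    and b0: "\<forall>i<n. b i = 0"
    and nonzero: "\<exists>i<n. \<exists>j<n. a i j \<noteq> 0"
  shows "eacp_nilpotent a b n \<and> eacp_nil_index a b n = 3"
proof -
  have p3: "eacp_power a b n 3 = {\<lambda>m. 0}"
  proof
    show "eacp_power a b n 3 \<subseteq> {\<lambda>m. 0}"
    proof
      fix v assume "v \<in> eacp_power a b n 3"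
      hence "eacp_pow a b n 3 v" by (simp add: eacp_power_def)
      hence "v = (\<lambda>m. 0)" using inv[OF sq b0, of 3 v] by simp
      thus "v \<in> {\<lambda>m. 0}" by simp
    qed
    have "eacp_pow a b n 3 (\<lambda>m. 0)" by (rule eacp_pow.zero) simp
    thus "{\<lambda>m. 0} \<subseteq> eacp_power a b n 3" by (simp add: eacp_power_def)
  qed
  have p1: "eacp_power a b n 1 \<noteq> {\<lambda>m. 0}"
  proof
    assume h: "eacp_power a b n 1 = {\<lambda>m. 0}"
    have "(\<lambda>m::nat. if m = 0 then 1 else 0 :: 'k) \<in> eacp_carrier n"
      using n by (simp add: eacp_carrier_def)
    hence "(\<lambda>m::nat. if m = 0 then 1 else 0 :: 'k) \<in> eacp_power a b n 1"
      unfolding eacp_power_def using eacp_pow.base[of _ n a b] by simp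
    with h have "(\<lambda>m::nat. if m = 0 then 1 else 0 :: 'k) = (\<lambda>m. 0)" by simp
    hence "(if (0::nat) = 0 then 1 else 0 :: 'k) = 0" by meson
    thus False by simp
  qed
  obtain i j where ij: "i < n" "j < n" "a i j \<noteq> 0" using nonzero by blast
  define x where "x = (\<lambda>m. if m = i then 1 else 0 :: 'k)"
  define y where "y = (\<lambda>m. if m = n then 1 else 0 :: 'k)"
  have xc: "x \<in> eacp_carrier n" using ij by (simp add: eacp_carrier_def x_def)
  have yc: "y \<in> eacp_carrier n" by (simp add: eacp_carrier_def y_def)
  have "eacp_pow a b n (1+1) (eacp_mult a b n x y)"
    using eacp_pow.prod[OF eacp_pow.base[OF xc] eacp_pow.base[OF yc]] .
  hence mem: "eacp_mult a b n x y \<in> eacp_power a b n 2" by (simp add: eacp_power_def numeral_2_eq_2)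
  have "eacp_mult a b n x y j = (\<Sum>l<n. (x l * y n + x n * y l) * a l j) / 2"
    using ij by (simp add: mult_lt)
  also have "\<dots> = (\<Sum>l<n. (if l = i then a l j else 0)) / 2"
    using ij by (intro arg_cong[where f="\<lambda>s. s / 2"] sum.cong) (auto simp: x_def y_def)
  also have "\<dots> = a i j / 2" using ij by simp
  finally have "eacp_mult a b n x y j \<noteq> 0" using ij char by auto
  hence p2: "eacp_power a b n 2 \<noteq> {\<lambda>m. 0}" using mem by auto
  have nil: "eacp_nilpotent a b n" unfolding eacp_nilpotent_def using p3 by (intro exI[of _ 3]) simp
  have "eacp_nil_index a b n = 3"
    unfolding eacp_nil_index_def
  proof (rule Least_equality)
    show "3 \<ge> (1::nat) \<and> eacp_power a b n 3 = {\<lambda>m. 0}" using p3 by simp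
  next
    fix k :: nat assume "1 \<le> k \<and> eacp_power a b n k = {\<lambda>m. 0}"
    thus "3 \<le> k" using p1 p2 by (cases "k = 1"; cases "k = 2") auto
  qed
  with nil show ?thesis by simp
qed

end
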